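(* Let $\lambda=(\lambda_1,\dots,\lambda_l)$ be a partition of length $l$, $\tau(t)=s_\lambda(t)+\sum_{\lambda<\mu}\xi_\mu s_\mu(t)$ with $\xi_\mu\in\mathbb C$, and $0\le k\le l$. Then $$\partial_1^{N_{\lambda,k}}\tau\Big(\sum_{i=1}^k[x_i]\Big)=c'_{\lambda,k}\,\tau^{(k)}\Big(\sum_{i=1}^k[x_i]\Big),\qquad c'_{\lambda,k}=\frac{N_{\lambda,k}!}{\prod_{i=1}^{l-k}w_i!}\prod_{1\le i<j\le l-k}(w_j-w_i).$$
   Context: For $t=(t_1,t_2,\dots)$ define $p_m(t)$ by $\exp(\sum_{m\ge1}t_mk^m)=\sum_{m\ge0}p_m(t)k^m$, $p_m=0$ for $m<0$; $s_\mu(t)=\det(p_{\mu_i-i+j}(t))_{1\le i,j\le l}$. $[x]=(x,x^2/2,\dots)$, $\partial_1=\partial/\partial t_1$. $\lambda<\mu$ means $\lambda_i\le\mu_i$ for all $i$ and $\lambda\ne\mu$. $\tau$ is a formal series, differentiated termwise, evaluations being formal power series in the $x_i$. $N_{\lambda,k}=\lambda_{k+1}+\dots+\lambda_l$; $(w_l,\dots,w_1)=(\lambda_1,\dots,\lambda_l)+(l-1,\dots,1,0)$. For $1\le k\le l$, $\tau^{(k)}(t)=s_{(\lambda_1,\dots,\lambda_k)}(t)+\sum_\mu\xi_\mu s_{(\mu_1,\dots,\mu_k)}(t)$ summed over partitions $\mu=(\mu_1,\dots,\mu_l)$ with $\lambda<\mu$ and $\mu_i=\lambda_i$ for $k+1\le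 i\le l$; $\tau^{(0)}=1$. For $k=0$ evaluation is at $t=0$. *)

theory Defs
  imports Complex_Main "HOL-Analysis.Derivative"
    "HOL-Computational_Algebra.Formal_Power_Series"
    "Jordan_Normal_Form.Determinant"
begin

text \<open>Partitions are represented as lists of positive, weakly decreasing naturals.
  Entry i (0-indexed) of a list is the part mu_(i+1); parts beyond the length are 0.\<close>

definition is_partition :: "nat list \<Rightarrow> bool" where
  "is_partition mu \<longleftrightarrow> sorted_wrt (\<ge>) mu \<and> 0 \<notin> set mu"

definition part :: "nat list \<Rightarrow> nat \<Rightarrow> nat" where
  "part mu i = (if i < length mu then mu ! i else 0)"

definition plt :: "nat list \<Rightarrow> nat list \<Rightarrow> bool" where
  "plt lam mu \<longleftrightarrow> (\<forall>i. part lam i \<le> part mu i) \<and> lam \<noteq> mu"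

text \<open>Times t = (t_1, t_2, ...) are functions nat \<Rightarrow> complex (t 0 unused).
  p_m(t) is the coefficient of k^m in exp(sum_{m\<ge>1} t_m k^m).\<close>
definition hp :: "nat \<Rightarrow> (nat \<Rightarrow> complex) \<Rightarrow> complex" where
  "hp m t = fps_nth (fps_compose (fps_exp 1) (Abs_fps (\<lambda>n. if n = 0 then 0 else t n))) m"

definition hpi :: "int \<Rightarrow> (nat \<Rightarrow> complex) \<Rightarrow> complex" where
  "hpi m t = (if m < 0 then 0 else hp (nat m) t)"

definition schur :: "nat list \<Rightarrow> (nat \<Rightarrow> complex) \<Rightarrow> complex" where
  "schur mu t = det (mat (length mu) (length mu)
      (\<lambda>(i, j). hpi (int (mu ! i) - int i + int j) t))"

definition d1 :: "((nat \<Rightarrow> complex) \<Rightarrow> complex) \<Rightarrow> ((nat \<Rightarrow> complex) \<Rightarrow> complex)" where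
  "d1 F t = deriv (\<lambda>z. F (t(1 := z))) (t 1)"

text \<open>t = [x_1] + ... + [x_k], where [x] = (x, x^2/2, x^3/3, ...).\<close>
definition tx :: "nat \<Rightarrow> (nat \<Rightarrow> complex) \<Rightarrow> nat \<Rightarrow> complex" where
  "tx k x m = (\<Sum>i=1..k. x i ^ m) / of_nat m"

text \<open>coefficient of s_mu in tau = s_lambda + sum_{lambda < mu} xi_mu s_mu\<close>
definition tau_coef :: "nat list \<Rightarrow> (nat list \<Rightarrow> complex) \<Rightarrow> nat list \<Rightarrow> complex" where
  "tau_coef lam xi mu = (if mu = lam then 1 else if plt lam mu then xi mu else 0)"

definition Nlk :: "nat list \<Rightarrow> nat \<Rightarrow> nat" where
  "Nlk lam k = (\<Sum>i\<in>{k..<length lam}. lam ! i)"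

text \<open>(w_l,...,w_1) = (lambda_1,...,lambda_l) + (l-1,...,1,0), i.e.
  w_j = lambda_{l+1-j} + j - 1 for 1 \<le> j \<le> l.\<close>
definition wv :: "nat list \<Rightarrow> nat \<Rightarrow> nat" where
  "wv lam j = lam ! (length lam - j) + (j - 1)"

definition cprime :: "nat list \<Rightarrow> nat \<Rightarrow> complex" where
  "cprime lam k =
     of_nat (fact (Nlk lam k)) / (\<Prod>i=1..length lam - k. of_nat (fact (wv lam i)))
     * (\<Prod>(i, j)\<in>{(i, j). 1 \<le> i \<and> i < j \<and> j \<le> length lam - k}.
          of_int (int (wv lam j) - int (wv lam i)))"

end

theory Submission
  imports Defs "HOL-Combinatorics.Multiset_Permutations"
begin


definition Tt :: "(nat \<Rightarrow> complex) \<Rightarrow> complex fps" where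
  "Tt t = Abs_fps (\<lambda>n. if n = 0 then 0 else t n)"

lemma hp_Tt: "hp m t = fps_nth (fps_exp 1 oo Tt t) m"
  by (simp add: hp_def Tt_def)

lemma hp_0[simp]: "hp 0 t = 1"
  by (simp add: hp_Tt Tt_def)

lemma hp_rec:
  "of_nat (Suc p) * hp (Suc p) t = (\<Sum>j=1..Suc p. of_nat j * t j * hp (Suc p - j) t)"
proof -
  let ?E = "fps_exp (1::complex) oo Tt t"
  have T0: "fps_nth (Tt t) 0 = 0" by (simp add: Tt_def)
  have "fps_deriv ?E = (fps_deriv (fps_exp 1) oo Tt t) * fps_deriv (Tt t)"
    by (rule fps_compose_deriv[OF T0])
  also have "\<dots> = ?E * fps_deriv (Tt t)" by simp
  finally have eq: "fps_deriv ?E = ?E * fps_deriv (Tt t)" .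
  have "of_nat (Suc p) * hp (Suc p) t = fps_nth (fps_deriv ?E) p"
    by (simp add: hp_Tt)
  also have "\<dots> = (\<Sum>i=0..p. fps_nth ?E i * (of_nat (p - i + 1) * t (p - i + 1)))"
    unfolding eq fps_mult_nth by (simp add: Tt_def)
  also have "\<dots> = (\<Sum>j=1..Suc p. of_nat j * t j * hp (Suc p - j) t)"
  proof (rule sum.reindex_bij_witness[where i="\<lambda>j. Suc p - j" and j="\<lambda>i. Suc p - i"])
  qed (auto simp: hp_Tt Suc_diff_le)
  finally show ?thesis .
qed

definition HD :: "((nat \<Rightarrow> complex) \<Rightarrow> complex) \<Rightarrow> ((nat \<Rightarrow> complex) \<Rightarrow> complex) \<Rightarrow> bool" where
  "HD F G \<longleftrightarrow> (\<forall>t z. ((\<lambda>z. F (t(1 := z))) has_field_derivative G (t(1 := z))) (at z))"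

lemma HD_d1: "HD F G \<Longrightarrow> d1 F = G"
proof
  fix t
  assume "HD F G"
  then have "((\<lambda>z. F (t(1 := z))) has_field_derivative G (t(1 := t 1))) (at (t 1))"
    unfolding HD_def by blast
  then show "d1 F t = G t" unfolding d1_def by (simp add: DERIV_imp_deriv)
qed

lemma HD_const: "HD (\<lambda>t. c) (\<lambda>t. 0)"
  by (simp add: HD_def)

lemma HD_var: "HD (\<lambda>t. t j) (\<lambda>t. if j = 1 then 1 else 0)"
  by (auto simp: HD_def)

lemma HD_add: "HD F F' \<Longrightarrow> HD G G' \<Longrightarrow> HD (\<lambda>t. F t + G t) (\<lambda>t. F' t + G' t)"
  by (auto simp: HD_def intro!: derivative_eq_intros)

lemma HD_mult: "HD F F' \<Longrightarrow> HD G G' \<Longrightarrow> HD (\<lambda>t. F t * G t) (\<lambda>t. F' t * G t + F t * G' t)"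
  unfolding HD_def
  by (auto intro!: derivative_eq_intros simp: algebra_simps)

lemma HD_cmult: "HD F F' \<Longrightarrow> HD (\<lambda>t. c * F t) (\<lambda>t. c * F' t)"
  unfolding HD_def
  by (auto intro!: derivative_eq_intros)

lemma HD_sum: "(\<And>a. a \<in> A \<Longrightarrow> HD (F a) (F' a)) \<Longrightarrow> HD (\<lambda>t. \<Sum>a\<in>A. F a t) (\<lambda>t. \<Sum>a\<in>A. F' a t)"
  unfolding HD_def
  by (auto intro!: DERIV_sum)

lemma HD_prod: "(\<And>a. a \<in> A \<Longrightarrow> HD (F a) (F' a)) \<Longrightarrow>
   HD (\<lambda>t. \<Prod>a\<in>A. F a t) (\<lambda>t. \<Sum>a\<in>A. F' a t * (\<Prod>b\<in>A-{a}. F b t))"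
  unfolding HD_def
  by (auto intro!: has_field_derivative_prod)

lemma HD_cong: "HD F F' \<Longrightarrow> F = G \<Longrightarrow> F' = G' \<Longrightarrow> HD G G'"
  by simp

lemma HD_hp: "HD (hp m) (hpi (int m - 1))"
proof (induction m rule: less_induct)
  case (less m)
  show ?case
  proof (cases m)
    case 0
    then show ?thesis by (simp add: HD_def hpi_def)
  next
    case (Suc p)
    have hpeq: "hp m = (\<lambda>t. (\<Sum>j=1..m. of_nat j * t j * hp (m - j) t) / of_nat m)"
      using hp_rec[of p] Suc by (auto simp: field_simps simp del: of_nat_Suc)
    have IH: "HD (hp (m - j)) (hpi (int (m - j) - 1))" if "j \<in> {1..m}" for j
      using less[of "m - j"] that by (auto simp: of_nat_diff)
    have "HD (\<lambda>t. (1 / of_nat m) * (\<Sum>j=1..m. of_nat j * t j * hp (m - j) t))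
       (\<lambda>t. (1 / of_nat m) * (\<Sum>j=1..m. ((of_nat j * (if j = 1 then 1 else 0)) * hp (m - j) t
            + of_nat j * t j * hpi (int (m - j) - 1) t)))"
      apply (rule HD_cmult, rule HD_sum)
      apply (rule HD_cong[OF HD_mult[OF HD_cmult[OF HD_var] IH]])
      by auto
    moreover have "(\<lambda>t. (1 / of_nat m) * (\<Sum>j=1..m. ((of_nat j * (if j = 1 then 1 else 0)) * hp (m - j) t
            + of_nat j * t j * hpi (int (m - j) - 1) t))) = hpi (int m - 1)"
    proof
      fix t
      have s1: "(\<Sum>j=1..m. ((of_nat j * (if j = 1 then 1 else 0)) * hp (m - j) t)) = hp p t"
        using Suc by (simp add: sum.delta' if_distrib[of "\<lambda>x. _ * x * _"] cong: if_cong)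
      have s2: "(\<Sum>j=1..m. of_nat j * t j * hpi (int (m - j) - 1) t) = of_nat p * hp p t"
      proof (cases p)
        case 0
        then show ?thesis using Suc by (simp add: hpi_def)
      next
        case (Suc q)
        have "(\<Sum>j=1..m. of_nat j * t j * hpi (int (m - j) - 1) t)
           = (\<Sum>j=1..Suc q. of_nat j * t j * hpi (int (m - j) - 1) t) + of_nat m * t m * hpi (-1) t"
          using \<open>m = Suc p\<close> Suc by simp
        also have "\<dots> = (\<Sum>j=1..Suc q. of_nat j * t j * hpi (int (m - j) - 1) t)"
          by (simp add: hpi_def)
        also have "\<dots> = (\<Sum>j=1..Suc q. of_nat j * t j * hp (Suc q - j) t)"
        proof (rule sum.cong)
          fix x assume "x \<in> {1..Suc q}"
          moreover have "nat (1 + (int q - int x)) = Suc q - x" using \<open>x \<in> _\<close> by auto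
          ultimately show "of_nat x * t x * hpi (int (m - x) - 1) t = of_nat x * t x * hp (Suc q - x) t"
            using \<open>m = Suc p\<close> Suc by (auto simp: hpi_def of_nat_diff nat_diff_distrib)
        qed simp
        also have "\<dots> = of_nat p * hp p t" using hp_rec[of q t] Suc by simp
        finally show ?thesis .
      qed
      show "(1 / of_nat m) * (\<Sum>j=1..m. ((of_nat j * (if j = 1 then 1 else 0)) * hp (m - j) t
            + of_nat j * t j * hpi (int (m - j) - 1) t)) = hpi (int m - 1) t"
      proof -
        have nz: "(1 + of_nat p :: complex) \<noteq> 0"
          by (metis of_nat_Suc of_nat_eq_0_iff nat.distinct(1) add.commute)
        have "hp p t + of_nat p * hp p t = (1 + of_nat p) * hp p t" by (simp add: algebra_simps)
        then show ?thesis
          unfolding sum.distrib s1 s2 using Suc nz by (simp add: hpi_def)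
      qed
    qed
    ultimately show ?thesis using hpeq by (simp add: mult.commute)
  qed
qed

lemma HD_hpi: "HD (hpi m) (hpi (m - 1))"
proof (cases "m < 0")
  case True
  then show ?thesis by (simp add: hpi_def HD_def)
next
  case False
  then have "hpi m = hp (nat m)" by (auto simp: hpi_def)
  moreover have "int (nat m) - 1 = m - 1" using False by simp
  ultimately show ?thesis using HD_hp[of "nat m"] by simp
qed

definition Gd :: "nat \<Rightarrow> (nat \<Rightarrow> int) \<Rightarrow> (nat \<Rightarrow> complex) \<Rightarrow> complex" where
  "Gd n c t = det (mat n n (\<lambda>(i,j). hpi (c i + int j) t))"

lemma Gd_expand: "Gd n c t = (\<Sum>p \<in> {p. p permutes {0..<n}}. signof p * (\<Prod>i\<in>{0..<n}. hpi (c i + int (p i)) t))"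
  unfolding Gd_def
  by (subst det_def'[of _ n]) (auto intro!: sum.cong prod.cong simp: permutes_in_image)

lemma Gd_fun: "Gd n c = (\<lambda>t. \<Sum>p \<in> {p. p permutes {0..<n}}. signof p * (\<Prod>i\<in>{0..<n}. hpi (c i + int (p i)) t))"
  using Gd_expand by blast

lemma HD_Gd: "HD (Gd n c) (\<lambda>t. \<Sum>r\<in>{0..<n}. Gd n (c(r := c r - 1)) t)"
proof -
  have "HD (Gd n c) (\<lambda>t. \<Sum>p \<in> {p. p permutes {0..<n}}. signof p *
     (\<Sum>r\<in>{0..<n}. hpi (c r + int (p r) - 1) t * (\<Prod>i\<in>{0..<n}-{r}. hpi (c i + int (p i)) t)))"
    unfolding Gd_fun
    by (intro HD_sum HD_cmult HD_prod HD_hpi)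
  moreover have "(\<lambda>t. \<Sum>p \<in> {p. p permutes {0..<n}}. signof p *
     (\<Sum>r\<in>{0..<n}. hpi (c r + int (p r) - 1) t * (\<Prod>i\<in>{0..<n}-{r}. hpi (c i + int (p i)) t)))
     = (\<lambda>t. \<Sum>r\<in>{0..<n}. Gd n (c(r := c r - 1)) t)"
  proof
    fix t
    have "(\<Sum>p \<in> {p. p permutes {0..<n}}. signof p *
     (\<Sum>r\<in>{0..<n}. hpi (c r + int (p r) - 1) t * (\<Prod>i\<in>{0..<n}-{r}. hpi (c i + int (p i)) t)))
     = (\<Sum>r\<in>{0..<n}. \<Sum>p \<in> {p. p permutes {0..<n}}. signof p *
          (hpi (c r + int (p r) - 1) t * (\<Prod>i\<in>{0..<n}-{r}. hpi (c i + int (p i)) t)))"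
      by (simp add: sum_distrib_left sum.swap[of _ _ "{0..<n}"])
    also have "\<dots> = (\<Sum>r\<in>{0..<n}. Gd n (c(r := c r - 1)) t)"
    proof (rule sum.cong[OF refl])
      fix r assume r: "r \<in> {0..<n}"
      show "(\<Sum>p \<in> {p. p permutes {0..<n}}. signof p *
          (hpi (c r + int (p r) - 1) t * (\<Prod>i\<in>{0..<n}-{r}. hpi (c i + int (p i)) t))) = Gd n (c(r := c r - 1)) t"
        unfolding Gd_expand
      proof (rule sum.cong[OF refl])
        fix p
        have "(\<Prod>i\<in>{0..<n}. hpi ((c(r := c r - 1)) i + int (p i)) t)
           = hpi ((c(r := c r - 1)) r + int (p r)) t * (\<Prod>i\<in>{0..<n}-{r}. hpi ((c(r := c r - 1)) i + int (p i)) t)"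
          using r by (simp add: prod.remove)
        also have "\<dots> = hpi (c r + int (p r) - 1) t * (\<Prod>i\<in>{0..<n}-{r}. hpi (c i + int (p i)) t)"
          by (auto intro!: prod.cong arg_cong2[where f=hpi])
        finally show "signof p * (hpi (c r + int (p r) - 1) t * (\<Prod>i\<in>{0..<n}-{r}. hpi (c i + int (p i)) t))
          = signof p * (\<Prod>i\<in>{0..<n}. hpi ((c(r := c r - 1)) i + int (p i)) t)" by simp
      qed
    qed
    finally show "(\<Sum>p \<in> {p. p permutes {0..<n}}. signof p *
     (\<Sum>r\<in>{0..<n}. hpi (c r + int (p r) - 1) t * (\<Prod>i\<in>{0..<n}-{r}. hpi (c i + int (p i)) t)))
     = (\<Sum>r\<in>{0..<n}. Gd n (c(r := c r - 1)) t)" .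
  qed
  ultimately show ?thesis by simp
qed

definition LL :: "nat \<Rightarrow> nat \<Rightarrow> nat list set" where
  "LL N n = {xs. set xs \<subseteq> {0..<n} \<and> length xs = N}"

lemma finite_LL[simp]: "finite (LL N n)"
  unfolding LL_def by (rule finite_lists_length_eq) simp

definition cnt :: "nat list \<Rightarrow> nat \<Rightarrow> int" where
  "cnt xs i = int (count (mset xs) i)"

lemma LL_Suc: "LL (Suc N) n = (\<lambda>(r, xs). r # xs) ` ({0..<n} \<times> LL N n)"
  unfolding LL_def
  by (auto simp: image_iff length_Suc_conv)

lemma d1_pow_Gd:
  "(d1 ^^ N) (Gd n c) = (\<lambda>t. \<Sum>xs\<in>LL N n. Gd n (\<lambda>i. c i - cnt xs i) t)"
proof (induction N)
  case 0
  have "LL 0 n = {[]}" by (auto simp: LL_def)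
  then show ?case by (simp add: cnt_def)
next
  case (Suc N)
  have "HD (\<lambda>t. \<Sum>xs\<in>LL N n. Gd n (\<lambda>i. c i - cnt xs i) t)
      (\<lambda>t. \<Sum>xs\<in>LL N n. \<Sum>r\<in>{0..<n}. Gd n ((\<lambda>i. c i - cnt xs i)(r := c r - cnt xs r - 1)) t)"
    by (intro HD_sum HD_Gd)
  then have "d1 (\<lambda>t. \<Sum>xs\<in>LL N n. Gd n (\<lambda>i. c i - cnt xs i) t) =
      (\<lambda>t. \<Sum>xs\<in>LL N n. \<Sum>r\<in>{0..<n}. Gd n ((\<lambda>i. c i - cnt xs i)(r := c r - cnt xs r - 1)) t)"
    by (rule HD_d1)
  also have "\<dots> = (\<lambda>t. \<Sum>ys\<in>LL (Suc N) n. Gd n (\<lambda>i. c i - cnt ys i) t)"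
  proof
    fix t
    have fun_eq: "(\<lambda>i. c i - cnt xs i)(r := c r - cnt xs r - 1) = (\<lambda>i. c i - cnt (r # xs) i)" for r xs
      by (auto simp: cnt_def)
    have inj: "inj_on (\<lambda>(r, xs). r # xs) ({0..<n} \<times> LL N n)"
      by (auto simp: inj_on_def)
    have "(\<Sum>xs\<in>LL N n. \<Sum>r\<in>{0..<n}. Gd n ((\<lambda>i. c i - cnt xs i)(r := c r - cnt xs r - 1)) t)
        = (\<Sum>r\<in>{0..<n}. \<Sum>xs\<in>LL N n. Gd n (\<lambda>i. c i - cnt (r # xs) i) t)"
      unfolding fun_eq by (rule sum.swap)
    also have "\<dots> = (\<Sum>(r, xs)\<in>{0..<n} \<times> LL N n. Gd n (\<lambda>i. c i - cnt (r # xs) i) t)"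
      by (simp add: sum.cartesian_product)
    also have "\<dots> = (\<Sum>ys\<in>LL (Suc N) n. Gd n (\<lambda>i. c i - cnt ys i) t)"
      unfolding LL_Suc sum.reindex[OF inj] by (simp add: case_prod_unfold)
    finally show "(\<Sum>xs\<in>LL N n. \<Sum>r\<in>{0..<n}. Gd n ((\<lambda>i. c i - cnt xs i)(r := c r - cnt xs r - 1)) t)
        = (\<Sum>ys\<in>LL (Suc N) n. Gd n (\<lambda>i. c i - cnt ys i) t)" .
  qed
  finally show ?case using Suc by simp
qed

definition PP :: "(nat \<Rightarrow> complex) \<Rightarrow> nat \<Rightarrow> complex fps" where
  "PP x k = (\<Prod>i=1..k. 1 - fps_const (x i) * fps_X)"

definition DD :: "(nat \<Rightarrow> complex) \<Rightarrow> nat \<Rightarrow> complex fps" where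
  "DD x k = Abs_fps (\<lambda>n. \<Sum>i=1..k. x i ^ Suc n)"

lemma PP_Suc: "PP x (Suc k) = PP x k * (1 - fps_const (x (Suc k)) * fps_X)"
  by (simp add: PP_def)

lemma DD_Suc: "DD x (Suc k) = DD x k + Abs_fps (\<lambda>n. x (Suc k) ^ Suc n)"
  by (simp add: DD_def fps_eq_iff)

lemma geo_aux: "(1 - fps_const c * fps_X) * Abs_fps (\<lambda>n. c ^ Suc n) = fps_const (c::complex)"
proof -
  have "(1 - fps_const c * fps_X) * Abs_fps (\<lambda>n. c ^ Suc n) =
     Abs_fps (\<lambda>n. c ^ Suc n) - fps_const c * (fps_X * Abs_fps (\<lambda>n. c ^ Suc n))"
    by (simp add: algebra_simps)
  also have "\<dots> = fps_const c"
    by (auto simp: fps_eq_iff) (metis Suc_pred power_Suc)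
  finally show ?thesis .
qed

lemma PP_deriv: "fps_deriv (PP x k) = - PP x k * DD x k"
proof (induction k)
  case 0
  then show ?case by (simp add: PP_def DD_def fps_eq_iff)
next
  case (Suc k)
  let ?c = "x (Suc k)"
  let ?G = "Abs_fps (\<lambda>n. ?c ^ Suc n)"
  have "fps_deriv (PP x (Suc k)) = fps_deriv (PP x k) * (1 - fps_const ?c * fps_X) - PP x k * fps_const ?c"
    by (simp add: PP_Suc) (metis fps_const_neg mult_minus_right)
  also have "\<dots> = - PP x k * DD x k * (1 - fps_const ?c * fps_X) - PP x k * ((1 - fps_const ?c * fps_X) * ?G)"
    using Suc geo_aux[of ?c] by simp
  also have "\<dots> = - PP x (Suc k) * DD x (Suc k)"
    by (simp add: PP_Suc DD_Suc algebra_simps)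
  finally show ?case .
qed

lemma PP_0: "fps_nth (PP x k) 0 = 1"
  by (induction k) (simp_all add: PP_def)

lemma PP_high: "r > k \<Longrightarrow> fps_nth (PP x k) r = 0"
proof (induction k arbitrary: r)
  case 0
  then show ?case by (simp add: PP_def)
next
  case (Suc k)
  have "PP x (Suc k) = PP x k - fps_const (x (Suc k)) * (fps_X * PP x k)"
    by (simp add: PP_Suc algebra_simps)
  then show ?case using Suc by simp
qed

lemma deriv_Tt_tx: "fps_deriv (Tt (tx k x)) = DD x k"
  by (simp add: fps_eq_iff Tt_def tx_def DD_def del: of_nat_Suc)

lemma PP_H: "PP x k * (fps_exp 1 oo Tt (tx k x)) = 1"
proof -
  let ?H = "fps_exp (1::complex) oo Tt (tx k x)"
  have T0: "fps_nth (Tt (tx k x)) 0 = 0" by (simp add: Tt_def)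
  have dH: "fps_deriv ?H = ?H * DD x k"
    using fps_compose_deriv[OF T0, of "fps_exp 1"] deriv_Tt_tx by simp
  have "fps_deriv (PP x k * ?H) = 0"
    by (simp add: dH PP_deriv algebra_simps)
  then have "PP x k * ?H = fps_const (fps_nth (PP x k * ?H) 0)"
    using fps_deriv_eq_0_iff by blast
  also have "\<dots> = 1" by (simp add: PP_0)
  finally show ?thesis .
qed

lemma miwa_rec:
  assumes "m > 0"
  shows "(\<Sum>r=0..m. fps_nth (PP x k) r * hp (m - r) (tx k x)) = 0"
proof -
  have "fps_nth (PP x k * (fps_exp 1 oo Tt (tx k x))) m = 0"
    using assms by (simp add: PP_H)
  then show ?thesis by (simp add: fps_mult_nth hp_Tt)
qed



lemma col_zero_sum:
  fixes k j :: nat and x :: "nat \<Rightarrow> complex" and ci :: int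
  assumes "k \<le> j"
  shows "(\<Sum>r=0..j. fps_nth (PP x k) r * hpi (ci + int j - int r) (tx k x))
       = (if ci + int j = 0 then 1 else 0)"
proof (cases "ci + int j < 0")
  case True
  then have "ci + int j - int r < 0" for r by simp
  then show ?thesis using True by (simp add: hpi_def)
next
  case False
  define M where "M = nat (ci + int j)"
  have m: "ci + int j = int M" using False M_def by auto
  let ?g = "\<lambda>r. fps_nth (PP x k) r * hpi (int M - int r) (tx k x)"
  have "(\<Sum>r=0..j. ?g r) = (\<Sum>r=0..min j M. ?g r)"
    by (rule sum.mono_neutral_right) (auto simp: hpi_def)
  also have "\<dots> = (\<Sum>r=0..M. ?g r)"
    by (rule sum.mono_neutral_left) (use assms in \<open>auto simp: PP_high\<close>)
  also have "\<dots> = (if M = 0 then 1 else 0)"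
  proof (cases "M = 0")
    case True
    then show ?thesis by (simp add: PP_0 hpi_def)
  next
    case False
    have "(\<Sum>r=0..M. ?g r) = (\<Sum>r=0..M. fps_nth (PP x k) r * hp (M - r) (tx k x))"
      by (intro sum.cong) (auto simp: hpi_def nat_diff_distrib)
    also have "\<dots> = 0" by (rule miwa_rec) (use False in simp)
    finally show ?thesis using False by simp
  qed
  finally show ?thesis by (simp add: m)
qed

definition QQ :: "(nat \<Rightarrow> complex) \<Rightarrow> nat \<Rightarrow> nat \<Rightarrow> complex mat" where
  "QQ x k n = mat n n (\<lambda>(j', j). if j' \<le> j then fps_nth (PP x k) (j - j') else 0)"

lemma det_QQ: "det (QQ x k n) = 1"
proof -
  have "det (QQ x k n) = prod_list (diag_mat (QQ x k n))"
    by (rule det_upper_triangular) (auto simp: upper_triangular_def QQ_def)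
  moreover have "diag_mat (QQ x k n) = replicate n 1"
    by (auto simp: diag_mat_def QQ_def PP_0 intro: nth_equalityI)
  ultimately show ?thesis by simp
qed

lemma MQ_entry:
  assumes "i < n" "j < n" "k \<le> j"
  shows "(mat n n (\<lambda>(i,j). hpi (c i + int j) (tx k x)) * QQ x k n) $$ (i, j)
       = (if c i + int j = 0 then 1 else 0)"
proof -
  have "(mat n n (\<lambda>(i,j). hpi (c i + int j) (tx k x)) * QQ x k n) $$ (i, j)
      = (\<Sum>j'\<in>{0..<n}. hpi (c i + int j') (tx k x) * (if j' \<le> j then fps_nth (PP x k) (j - j') else 0))"
    using assms by (simp add: QQ_def scalar_prod_def)
  also have "\<dots> = (\<Sum>j'\<in>{0..j}. hpi (c i + int j') (tx k x) * fps_nth (PP x k) (j - j'))"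
    by (rule sum.mono_neutral_cong_right) (use assms in auto)
  also have "\<dots> = (\<Sum>r=0..j. fps_nth (PP x k) r * hpi (c i + int j - int r) (tx k x))"
    by (rule sum.reindex_bij_witness[where i="\<lambda>r. j - r" and j="\<lambda>j'. j - j'"]) (auto simp: of_nat_diff)
  also have "\<dots> = (if c i + int j = 0 then 1 else 0)"
    by (rule col_zero_sum[OF assms(3)])
  finally show ?thesis .
qed

lemma vanish:
  assumes "Gd n c (tx k x) \<noteq> 0"
  shows "\<exists>\<sigma>. \<sigma> permutes {0..<n} \<and> (\<forall>i<n. \<sigma> i \<ge> k \<longrightarrow> c i = - int (\<sigma> i))"
proof -
  define M where "M = mat n n (\<lambda>(i,j). hpi (c i + int j) (tx k x))"
  define MQ where "MQ = M * QQ x k n"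
  have Mc: "M \<in> carrier_mat n n" by (simp add: M_def)
  have Qc: "QQ x k n \<in> carrier_mat n n" by (simp add: QQ_def)
  have carr: "MQ \<in> carrier_mat n n" unfolding MQ_def using Mc Qc by (rule mult_carrier_mat)
  have "det MQ = det M * det (QQ x k n)"
    unfolding MQ_def using Mc Qc by (rule det_mult)
  then have "det MQ = Gd n c (tx k x)" by (simp add: det_QQ Gd_def M_def)
  then have "det MQ \<noteq> 0" using assms by simp
  then have "(\<Sum>p \<in> {p. p permutes {0..<n}}. signof p * (\<Prod>i = 0..<n. MQ $$ (i, p i))) \<noteq> 0"
    unfolding det_def'[OF carr] .
  then obtain p where p1: "p \<in> {p. p permutes {0..<n}}" and p2: "signof p * (\<Prod>i = 0..<n. MQ $$ (i, p i)) \<noteq> 0"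
    by (rule sum.not_neutral_contains_not_neutral)
  have p: "p permutes {0..<n}" using p1 by simp
  have pr: "(\<Prod>i = 0..<n. MQ $$ (i, p i)) \<noteq> 0" using p2 by (metis mult_zero_right)
  have "c i = - int (p i)" if "i < n" "p i \<ge> k" for i
  proof -
    have pi: "p i < n" using p that permutes_in_image by fastforce
    have "MQ $$ (i, p i) \<noteq> 0" using pr that
      by (metis (no_types) atLeastLessThan_iff finite_atLeastLessThan prod_zero_iff zero_le)
    then show ?thesis using MQ_entry[OF that(1) pi that(2), of c x] unfolding MQ_def M_def
      by (auto split: if_splits)
  qed
  then show ?thesis using p by blast
qed

lemma part_mono: "is_partition mu \<Longrightarrow> i \<le> j \<Longrightarrow> j < length mu \<Longrightarrow> mu ! j \<le> mu ! i"
  unfolding is_partition_def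
  by (cases "i = j") (auto dest: sorted_wrt_nth_less[of "\<lambda>x y. y \<le> x" mu i j])

lemma part_pos: "is_partition mu \<Longrightarrow> i < length mu \<Longrightarrow> mu ! i > 0"
  unfolding is_partition_def
  by (metis gr0I nth_mem)

lemma exchange:
  fixes f :: "nat \<Rightarrow> int"
  assumes S: "S \<subseteq> {0..<n}" and cS: "card S = n - k" and kn: "k \<le> n"
    and mono: "\<And>i j. i \<le> j \<Longrightarrow> j < n \<Longrightarrow> f j + int j \<le> f i + int i"
  shows "sum f {k..<n} + int (card (S - {k..<n})) \<le> sum f S"
proof (cases "k = n")
  case True
  have "finite S" using S finite_subset by blast
  then have "S = {}" using cS True by simp
  then show ?thesis using True by simp
next
  case False
  then have kn': "k < n" using kn by simp
  define T where "T = {k..<n}"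
  have fS: "finite S" using S finite_subset by blast
  have fT: "finite T" by (simp add: T_def)
  have s1: "sum f S = sum f (S \<inter> T) + sum f (S - T)"
    using fS by (rule sum.Int_Diff)
  have s2: "sum f T = sum f (S \<inter> T) + sum f (T - S)"
    using fT sum.Int_Diff[of T f S] by (simp add: Int_commute)
  have c1: "card S = card (S \<inter> T) + card (S - T)"
    using fS by (rule card_Int_Diff)
  have c2: "card T = card (S \<inter> T) + card (T - S)"
    using fT card_Int_Diff[of T S] by (simp add: Int_commute)
  have cT: "card T = n - k" by (simp add: T_def)
  have ceq: "card (S - T) = card (T - S)" using c1 c2 cT cS by simp
  have lo: "f k + 1 \<le> f i" if "i \<in> S - T" for i
  proof -
    have "i < k" using that S by (auto simp: T_def)
    then show ?thesis using mono[of i k] kn' by simp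
  qed
  have hi: "f j \<le> f k" if "j \<in> T - S" for j
  proof -
    have "k \<le> j" "j < n" using that by (auto simp: T_def)
    then show ?thesis using mono[of k j] by simp
  qed
  have "of_nat (card (S - T)) * (f k + 1) \<le> sum f (S - T)"
    by (rule sum_bounded_below) (use lo in auto)
  moreover have "sum f (T - S) \<le> of_nat (card (T - S)) * f k"
    by (rule sum_bounded_above) (use hi in auto)
  ultimately show ?thesis using s1 s2 ceq unfolding T_def[symmetric]
    by (simp add: algebra_simps)
qed

lemma mu_ge_lam:
  assumes lam: "is_partition lam" "length lam = l"
    and mu: "mu = lam \<or> plt lam mu" "length mu = n"
  shows "l \<le> n \<and> (\<forall>i<l. lam ! i \<le> mu ! i)"
proof (cases "mu = lam")
  case True
  then show ?thesis using lam mu by simp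
next
  case False
  then have pl: "\<forall>i. part lam i \<le> part mu i" using mu unfolding plt_def by auto
  have ln: "l \<le> n"
  proof (cases l)
    case 0 then show ?thesis by simp
  next
    case (Suc l')
    have "lam ! l' > 0" using part_pos[OF lam(1), of l'] lam(2) Suc by simp
    then have "part mu l' > 0" using pl[rule_format, of l'] lam(2) Suc by (simp add: part_def)
    then have "l' < n" using mu(2) by (simp add: part_def split: if_splits)
    then show ?thesis using Suc by simp
  qed
  moreover have "lam ! i \<le> mu ! i" if "i < l" for i
    using pl[rule_format, of i] that ln lam(2) mu(2) by (simp add: part_def)
  ultimately show ?thesis by blast
qed

lemma combi:
  assumes lam: "is_partition lam" "length lam = l" "k \<le> l"
    and mu: "is_partition mu" "mu = lam \<or> plt lam mu" "length mu = n"
    and asum: "(\<Sum>i\<in>{0..<n}. a i) = Nlk lam k"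
    and sig: "\<sigma> permutes {0..<n}"
    and sig2: "\<forall>i<n. k \<le> \<sigma> i \<longrightarrow> int (mu ! i) - int i - int (a i) = - int (\<sigma> i)"
  shows "n = l \<and> (\<forall>i\<in>{k..<l}. mu ! i = lam ! i) \<and> (\<forall>i<k. a i = 0) \<and> (\<forall>i<n. k \<le> \<sigma> i \<longleftrightarrow> k \<le> i)"
proof -
  obtain ln: "l \<le> n" and ge: "\<forall>i<l. lam ! i \<le> mu ! i"
    using mu_ge_lam[OF lam(1,2) mu(2,3)] by blast
  define S where "S = {i\<in>{0..<n}. k \<le> \<sigma> i}"
  define T where "T = {k..<n}"
  define f where "f i = int (mu ! i) - int i" for i
  have fS: "finite S" by (simp add: S_def)
  have Ssub: "S \<subseteq> {0..<n}" by (auto simp: S_def)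
  have bij: "bij_betw \<sigma> S T"
  proof -
    have inj: "inj_on \<sigma> S" using permutes_inj[OF sig] by (simp add: inj_on_def inj_def)
    have img: "\<sigma> ` {0..<n} = {0..<n}" using permutes_image[OF sig] .
    have "\<sigma> ` S = T"
    proof
      show "\<sigma> ` S \<subseteq> T" using img by (auto simp: S_def T_def)
    next
      show "T \<subseteq> \<sigma> ` S"
      proof
        fix j assume j: "j \<in> T"
        then have "j \<in> \<sigma> ` {0..<n}" using img by (auto simp: T_def)
        then obtain i where "i \<in> {0..<n}" "j = \<sigma> i" by auto
        then show "j \<in> \<sigma> ` S" using j by (auto simp: S_def T_def)
      qed
    qed
    then show ?thesis using inj by (simp add: bij_betw_def)
  qed
  have cS: "card S = n - k" using bij_betw_same_card[OF bij] by (simp add: T_def)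
  have ai: "int (a i) = f i + int (\<sigma> i)" if "i \<in> S" for i
    using sig2 that by (auto simp: S_def f_def)
  have sumS: "(\<Sum>i\<in>S. int (a i)) = sum f S + (\<Sum>j\<in>T. int j)"
  proof -
    have "(\<Sum>i\<in>S. int (a i)) = sum f S + (\<Sum>i\<in>S. int (\<sigma> i))"
      by (simp add: ai sum.distrib)
    also have "(\<Sum>i\<in>S. int (\<sigma> i)) = (\<Sum>j\<in>T. int j)"
      using sum.reindex_bij_betw[OF bij, of int] by simp
    finally show ?thesis .
  qed
  have kn: "k \<le> n" using lam(3) ln by simp
  have exch: "sum f T + int (card (S - T)) \<le> sum f S"
    unfolding T_def
  proof (rule exchange[OF Ssub cS kn])
    fix i j assume "i \<le> j" "j < n"
    then show "f j + int j \<le> f i + int i" using part_mono[OF mu(1), of i j] mu(3) by (simp add: f_def)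
  qed
  have sumT: "sum f T + (\<Sum>j\<in>T. int j) = (\<Sum>j\<in>T. int (mu ! j))"
    by (simp add: f_def sum.distrib[symmetric])
  have splitT: "(\<Sum>j\<in>T. int (mu ! j)) = (\<Sum>j\<in>{k..<l}. int (mu ! j)) + (\<Sum>j\<in>{l..<n}. int (mu ! j))"
    unfolding T_def using lam(3) ln by (simp add: sum.atLeastLessThan_concat)
  define D where "D = (\<Sum>j\<in>{k..<l}. int (mu ! j) - int (lam ! j))"
  define E where "E = (\<Sum>j\<in>{l..<n}. int (mu ! j))"
  have NN: "int (Nlk lam k) = (\<Sum>j\<in>{k..<l}. int (lam ! j))"
    by (simp add: Nlk_def lam(2))
  have splitkl: "(\<Sum>j\<in>{k..<l}. int (mu ! j)) = int (Nlk lam k) + D"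
    by (simp add: NN D_def sum_subtractf)
  define R where "R = (\<Sum>i\<in>{0..<n} - S. int (a i))"
  have tot: "int (Nlk lam k) = (\<Sum>i\<in>S. int (a i)) + R"
  proof -
    have "int (Nlk lam k) = (\<Sum>i\<in>{0..<n}. int (a i))" using asum by (simp add: of_nat_sum[symmetric])
    also have "\<dots> = (\<Sum>i\<in>S. int (a i)) + R"
      unfolding R_def using Ssub by (simp add: sum.subset_diff)
    finally show ?thesis .
  qed
  have D0: "D \<ge> 0" unfolding D_def using ge lam(2) by (intro sum_nonneg) auto
  have E0: "E \<ge> 0" unfolding E_def by (intro sum_nonneg) auto
  have R0: "R \<ge> 0" unfolding R_def by (intro sum_nonneg) auto
  have all0: "D = 0 \<and> E = 0 \<and> R = 0 \<and> card (S - T) = 0"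
    using tot sumS exch sumT splitT splitkl D0 E0 R0 unfolding E_def[symmetric] by linarith
  have "S \<subseteq> T" using all0 fS by auto
  then have ST: "S = T" using cS by (intro card_subset_eq) (auto simp: T_def)
  have nl: "n \<le> l"
  proof (rule ccontr)
    assume "\<not> n \<le> l"
    then have "l \<in> {l..<n}" by simp
    moreover have "\<forall>j\<in>{l..<n}. int (mu ! j) \<ge> 0" by simp
    have "\<forall>j\<in>{l..<n}. int (mu ! j) = 0"
      using sum_nonneg_eq_0_iff[of "{l..<n}" "\<lambda>j. int (mu ! j)"] all0 by (simp add: E_def)
    ultimately have "int (mu ! l) = 0" by blast
    moreover have "mu ! l > 0" using part_pos[OF mu(1), of l] mu(3) \<open>\<not> n \<le> l\<close> by simp
    ultimately show False by simp
  qed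
  have mueq: "\<forall>i\<in>{k..<l}. mu ! i = lam ! i"
  proof
    fix i assume i: "i \<in> {k..<l}"
    have "\<forall>j\<in>{k..<l}. int (mu ! j) - int (lam ! j) \<ge> 0" using ge by auto
    then have "\<forall>j\<in>{k..<l}. int (mu ! j) - int (lam ! j) = 0"
      using sum_nonneg_eq_0_iff[of "{k..<l}" "\<lambda>j. int (mu ! j) - int (lam ! j)"] all0 by (simp add: D_def)
    then have "int (mu ! i) - int (lam ! i) = 0" using i by blast
    then show "mu ! i = lam ! i" by simp
  qed
  have a0: "\<forall>i<k. a i = 0"
  proof (intro allI impI)
    fix i assume i: "i < k"
    then have "i \<in> {0..<n} - S" using ST kn by (auto simp: T_def)
    moreover have "\<forall>j\<in>{0..<n} - S. int (a j) = 0"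
      using sum_nonneg_eq_0_iff[of "{0..<n} - S" "\<lambda>j. int (a j)"] all0 by (simp add: R_def)
    ultimately have "int (a i) = 0" by blast
    then show "a i = 0" by simp
  qed
  have "\<forall>i<n. k \<le> \<sigma> i \<longleftrightarrow> k \<le> i"
    using ST by (auto simp: S_def T_def set_eq_iff)
  then show ?thesis using ln nl mueq a0 by simp
qed



lemma perm_lt_exists:
  fixes m :: nat
  assumes s: "\<sigma> permutes {0..<m}" and r: "\<rho> permutes {0..<m}" and ne: "\<sigma> \<noteq> \<rho>"
  shows "\<exists>i<m. \<sigma> i < \<rho> i"
proof (rule ccontr)
  assume "\<not> (\<exists>i<m. \<sigma> i < \<rho> i)"
  then have ge: "\<forall>i\<in>{0..<m}. \<rho> i \<le> \<sigma> i" by (metis atLeastLessThan_iff leI)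
  have eqs: "sum \<sigma> {0..<m} = sum \<rho> {0..<m}"
    using sum.permute[OF s, of id] sum.permute[OF r, of id] by simp
  have "\<forall>i\<in>{0..<m}. \<sigma> i = \<rho> i"
  proof (rule ccontr)
    assume "\<not> (\<forall>i\<in>{0..<m}. \<sigma> i = \<rho> i)"
    then obtain i where "i \<in> {0..<m}" "\<rho> i < \<sigma> i" using ge by force
    then have "sum \<rho> {0..<m} < sum \<sigma> {0..<m}"
      using ge by (intro sum_strict_mono_ex1) auto
    then show False using eqs by simp
  qed
  moreover have "\<forall>i. i \<notin> {0..<m} \<longrightarrow> \<sigma> i = \<rho> i"
    using permutes_not_in[OF s] permutes_not_in[OF r] by simp
  ultimately have "\<sigma> = \<rho>" by (metis ext)
  then show False using ne by simp
qed

lemma det_shift_perm: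
  fixes m :: nat
  assumes r: "\<rho> permutes {0..<m}"
  shows "det (mat m m (\<lambda>(i,j). hpi (int j - int (\<rho> i)) t)) = signof \<rho>"
proof -
  let ?g = "\<lambda>p. signof p * (\<Prod>i = 0..<m. mat m m (\<lambda>(i,j). hpi (int j - int (\<rho> i)) t) $$ (i, p i))"
  have det: "det (mat m m (\<lambda>(i,j). hpi (int j - int (\<rho> i)) t)) = (\<Sum>p\<in>{p. p permutes {0..<m}}. ?g p)"
    by (rule det_def') simp
  have z: "?g p = 0" if "p \<in> {p. p permutes {0..<m}} - {\<rho>}" for p
  proof -
    have p: "p permutes {0..<m}" "p \<noteq> \<rho>" using that by auto
    obtain i where i: "i < m" "p i < \<rho> i" using perm_lt_exists[OF p(1) r p(2)] by blast
    have "p i < m" using permutes_in_image[OF p(1)] i by simp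
    then have "mat m m (\<lambda>(i,j). hpi (int j - int (\<rho> i)) t) $$ (i, p i) = 0"
      using i by (simp add: hpi_def)
    then have "(\<Prod>i = 0..<m. mat m m (\<lambda>(i,j). hpi (int j - int (\<rho> i)) t) $$ (i, p i)) = 0"
      using i by (intro prod_zero) auto
    then show ?thesis by simp
  qed
  have "(\<Sum>p\<in>{p. p permutes {0..<m}}. ?g p) = ?g \<rho> + (\<Sum>p\<in>{p. p permutes {0..<m}} - {\<rho>}. ?g p)"
    using r by (subst sum.remove[of _ \<rho>]) (auto simp: finite_permutations)
  also have "(\<Sum>p\<in>{p. p permutes {0..<m}} - {\<rho>}. ?g p) = 0"
    using z by (intro sum.neutral) blast
  also have "?g \<rho> = signof \<rho>"
  proof -
    have "(\<Prod>i = 0..<m. mat m m (\<lambda>(i,j). hpi (int j - int (\<rho> i)) t) $$ (i, \<rho> i)) = 1"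
      using permutes_in_image[OF r] by (intro prod.neutral) (auto simp: hpi_def)
    then show ?thesis by simp
  qed
  finally show ?thesis using det by simp
qed

lemma stepF:
  assumes len: "length mu = l" and kl: "k \<le> l" and r: "\<rho> permutes {0..<l-k}"
    and c1: "\<forall>i<k. c i = int (mu ! i) - int i"
    and c2: "\<forall>i\<in>{k..<l}. c i = - int (k + \<rho> (i - k))"
  shows "Gd l c t = signof \<rho> * schur (take k mu) t"
proof -
  define m where "m = l - k"
  have lkm: "l = k + m" using kl by (simp add: m_def)
  define A where "A = mat k k (\<lambda>(i,j). hpi (c i + int j) t)"
  define B where "B = mat k m (\<lambda>(i,j). hpi (c i + int (k + j)) t)"
  define D where "D = mat m m (\<lambda>(i,j). hpi (int j - int (\<rho> i)) t)"
  have M: "mat l l (\<lambda>(i,j). hpi (c i + int j) t) = four_block_mat A B (0\<^sub>m m k) D"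
  proof (rule eq_matI)
    fix i j assume ij: "i < dim_row (four_block_mat A B (0\<^sub>m m k) D)" "j < dim_col (four_block_mat A B (0\<^sub>m m k) D)"
    then have i: "i < l" and j: "j < l" by (auto simp: four_block_mat_def A_def D_def lkm)
    show "mat l l (\<lambda>(i,j). hpi (c i + int j) t) $$ (i, j) = four_block_mat A B (0\<^sub>m m k) D $$ (i, j)"
    proof (cases "i < k")
      case True
      then show ?thesis using i j by (auto simp: four_block_mat_def A_def B_def D_def lkm)
    next
      case False
      then have ci: "c i = - int (k + \<rho> (i - k))" using c2 i by auto
      show ?thesis
      proof (cases "j < k")
        case True
        then show ?thesis using i j False ci by (auto simp: four_block_mat_def A_def B_def D_def lkm hpi_def)
      next
        case False2: False
        then show ?thesis using i j False ci
          by (auto simp: four_block_mat_def A_def B_def D_def lkm intro!: arg_cong2[where f=hpi])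
      qed
    qed
  qed (auto simp: four_block_mat_def A_def D_def lkm)
  have "Gd l c t = det (four_block_mat A B (0\<^sub>m m k) D)"
    unfolding Gd_def M ..
  also have "\<dots> = det A * det D"
    by (rule det_four_block_mat_lower_left_zero) (auto simp: A_def B_def D_def)
  also have "det D = signof \<rho>" unfolding D_def using r m_def det_shift_perm by simp
  also have "det A = schur (take k mu) t"
    unfolding A_def schur_def using len kl c1
    by (auto intro!: arg_cong[where f=det] eq_matI simp: min_def)
  finally show ?thesis by simp
qed

definition rf :: "int \<Rightarrow> complex" where
  "rf z = (if z < 0 then 0 else 1 / of_nat (fact (nat z)))"

lemma card_cnt:
  fixes A :: "nat \<Rightarrow> int"
  assumes sA: "(\<Sum>i\<in>{0..<l}. A i) = int N"
  shows "of_nat (card {xs \<in> LL N l. \<forall>i<l. cnt xs i = A i}) = (fact N :: complex) * (\<Prod>i\<in>{0..<l}. rf (A i))"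
proof (cases "\<exists>i<l. A i < 0")
  case True
  then obtain i where i: "i < l" "A i < 0" by blast
  have "{xs \<in> LL N l. \<forall>i<l. cnt xs i = A i} = {}"
    using i by (auto simp: cnt_def)
  moreover have "(\<Prod>i\<in>{0..<l}. rf (A i)) = 0"
    using i by (intro prod_zero) (auto simp: rf_def)
  ultimately show ?thesis by (metis card.empty of_nat_0 mult_zero_right)
next
  case False
  then have nn: "\<forall>i<l. A i \<ge> 0" by auto
  define M where "M = (\<Sum>i\<in>{0..<l}. replicate_mset (nat (A i)) i)"
  have cM: "count M j = (if j < l then nat (A j) else 0)" for j
    by (simp add: M_def count_sum)
  have sM: "size M = N"
  proof -
    have "int (size M) = (\<Sum>i\<in>{0..<l}. int (nat (A i)))" by (simp add: M_def)
    also have "\<dots> = (\<Sum>i\<in>{0..<l}. A i)" using nn by (intro sum.cong) auto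
    finally show ?thesis using sA by simp
  qed
  have setM: "set_mset M \<subseteq> {0..<l}"
    using cM by (auto simp: set_mset_def split: if_splits)
  have eqset: "{xs \<in> LL N l. \<forall>i<l. cnt xs i = A i} = permutations_of_multiset M"
  proof (rule Set.set_eqI, rule iffI)
    fix xs assume xs: "xs \<in> {xs \<in> LL N l. \<forall>i<l. cnt xs i = A i}"
    have "mset xs = M"
    proof (rule multiset_eqI)
      fix j
      show "count (mset xs) j = count M j"
      proof (cases "j < l")
        case True
        then show ?thesis using xs cM by (auto simp: cnt_def)
      next
        case False
        then have "j \<notin> set xs" using xs by (auto simp: LL_def)
        then show ?thesis using False cM by (simp add: count_mset_0_iff)
      qed
    qed
    then show "xs \<in> permutations_of_multiset M" by (simp add: permutations_of_multiset_def)
  next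
    fix xs assume "xs \<in> permutations_of_multiset M"
    then have m: "mset xs = M" by (simp add: permutations_of_multiset_def)
    have "set xs \<subseteq> {0..<l}" using setM m by (metis set_mset_mset)
    moreover have "length xs = N" using sM m by (metis size_mset)
    moreover have "\<forall>i<l. cnt xs i = A i" using m cM nn by (simp add: cnt_def)
    ultimately show "xs \<in> {xs \<in> LL N l. \<forall>i<l. cnt xs i = A i}" by (simp add: LL_def)
  qed
  have pr: "(\<Prod>x\<in>set_mset M. fact (count M x)) = (\<Prod>i\<in>{0..<l}. fact (nat (A i)) :: nat)"
  proof -
    have "(\<Prod>x\<in>set_mset M. fact (count M x)) = (\<Prod>i\<in>{0..<l}. fact (count M i) :: nat)"
      by (rule prod.mono_neutral_left) (use setM in \<open>auto simp: not_in_iff\<close>)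
    also have "\<dots> = (\<Prod>i\<in>{0..<l}. fact (nat (A i)))" using cM by (intro prod.cong) auto
    finally show ?thesis .
  qed
  have key: "card (permutations_of_multiset M) * (\<Prod>i\<in>{0..<l}. fact (nat (A i)) :: nat) = fact N"
    using card_permutations_of_multiset_aux[of M] pr sM by simp
  have pnz: "(\<Prod>i\<in>{0..<l}. of_nat (fact (nat (A i))) :: complex) \<noteq> 0"
    by (simp add: prod_zero_iff)
  have "of_nat (card (permutations_of_multiset M)) * (\<Prod>i\<in>{0..<l}. of_nat (fact (nat (A i))) :: complex) = fact N"
    using arg_cong[OF key, of "of_nat :: nat \<Rightarrow> complex"] by (simp add: of_nat_prod)
  then have "of_nat (card (permutations_of_multiset M)) = (fact N :: complex) / (\<Prod>i\<in>{0..<l}. of_nat (fact (nat (A i))))"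
    using pnz by (simp add: field_simps)
  also have "\<dots> = fact N * (\<Prod>i\<in>{0..<l}. rf (A i))"
  proof -
    have "(\<Prod>i\<in>{0..<l}. rf (A i)) = (\<Prod>i\<in>{0..<l}. 1 / of_nat (fact (nat (A i))))"
      using nn by (intro prod.cong) (auto simp: rf_def)
    also have "\<dots> = 1 / (\<Prod>i\<in>{0..<l}. of_nat (fact (nat (A i))))"
      by (simp add: prod_dividef)
    finally show ?thesis by simp
  qed
  finally show ?thesis using eqset by simp
qed

definition ff :: "complex \<Rightarrow> nat \<Rightarrow> complex" where
  "ff x q = (\<Prod>u\<in>{0..<q}. x - of_nat u)"

lemma ff_Suc: "ff x (Suc q) = ff x q * (x - of_nat q)"
  by (simp add: ff_def)

lemma ff_0[simp]: "ff x 0 = 1"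
  by (simp add: ff_def)

definition VV :: "nat \<Rightarrow> (nat \<Rightarrow> complex) \<Rightarrow> complex mat" where
  "VV m y = mat m m (\<lambda>(r,s). ff (y r) (m - 1 - s))"

lemma det_rowscale:
  "det (mat p p (\<lambda>(r,s). a r * f r s)) = (\<Prod>r\<in>{0..<p}. a r) * det (mat p p (\<lambda>(r,s). f r s))"
proof -
  have "det (mat p p (\<lambda>(r,s). a r * f r s)) =
     (\<Sum>q \<in> {q. q permutes {0..<p}}. signof q * (\<Prod>i = 0..<p. a i * f i (q i)))"
    by (subst det_def'[of _ p]) (auto intro!: sum.cong prod.cong simp: permutes_in_image)
  also have "\<dots> = (\<Sum>q \<in> {q. q permutes {0..<p}}. (\<Prod>r\<in>{0..<p}. a r) * (signof q * (\<Prod>i = 0..<p. f i (q i))))"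
    by (simp add: prod.distrib mult_ac)
  also have "\<dots> = (\<Prod>r\<in>{0..<p}. a r) * det (mat p p (\<lambda>(r,s). f r s))"
    by (subst det_def'[of _ p]) (auto simp: sum_distrib_left intro!: sum.cong prod.cong simp: permutes_in_image)
  finally show ?thesis .
qed

lemma vdm: "det (VV m y) = (\<Prod>b\<in>{0..<m}. \<Prod>a\<in>{0..<b}. y a - y b)"
proof (induction m)
  case 0
  then show ?case by (simp add: VV_def)
next
  case (Suc p)
  define m where "m = Suc p"
  define U where "U = mat m m (\<lambda>(s',s). (if s' = s then 1 else 0) + (if s' = Suc s then - (y p - of_nat (p - 1 - s)) else 0))"
  define B where "B = mat p p (\<lambda>(r,s). (y r - y p) * ff (y r) (p - 1 - s))"
  define C where "C = mat p 1 (\<lambda>_. 1 :: complex)"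
  have Uc: "U \<in> carrier_mat m m" by (simp add: U_def)
  have Vc: "VV m y \<in> carrier_mat m m" by (simp add: VV_def)
  have dU: "det U = 1"
  proof -
    have "det U = prod_list (diag_mat U)"
      by (rule det_lower_triangular[OF _ Uc]) (auto simp: U_def)
    moreover have "diag_mat U = replicate m 1"
      by (auto simp: diag_mat_def U_def intro: nth_equalityI)
    ultimately show ?thesis by simp
  qed
  have entry: "(VV m y * U) $$ (r, s) = (if s < p then (y r - y p) * ff (y r) (p - 1 - s) else 1)"
    if rs: "r < m" "s < m" for r s
  proof -
    have "(VV m y * U) $$ (r, s) = (\<Sum>s'\<in>{0..<m}. ff (y r) (m - 1 - s') *
        ((if s' = s then 1 else 0) + (if s' = Suc s then - (y p - of_nat (p - 1 - s)) else 0)))"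
      using rs by (simp add: VV_def U_def scalar_prod_def)
    also have "\<dots> = ff (y r) (m - 1 - s) + (if Suc s < m then ff (y r) (m - 1 - Suc s) * (- (y p - of_nat (p - 1 - s))) else 0)"
      using rs by (simp add: distrib_left sum.distrib if_distrib[of "\<lambda>z. _ * z"] sum.delta cong: if_cong)
    also have "\<dots> = (if s < p then (y r - y p) * ff (y r) (p - 1 - s) else 1)"
    proof (cases "s < p")
      case True
      then have "m - 1 - s = Suc (p - 1 - s)" by (simp add: m_def)
      then show ?thesis using True by (simp add: m_def ff_Suc algebra_simps)
    next
      case False
      then have "s = p" using rs by (simp add: m_def)
      then show ?thesis by (simp add: m_def)
    qed
    finally show ?thesis .
  qed
  have blk: "VV m y * U = four_block_mat B C (0\<^sub>m 1 p) (1\<^sub>m 1)"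
  proof (rule eq_matI)
    fix i j assume "i < dim_row (four_block_mat B C (0\<^sub>m 1 p) (1\<^sub>m 1))" "j < dim_col (four_block_mat B C (0\<^sub>m 1 p) (1\<^sub>m 1))"
    then have i: "i < m" and j: "j < m" by (auto simp: four_block_mat_def B_def m_def)
    show "(VV m y * U) $$ (i, j) = four_block_mat B C (0\<^sub>m 1 p) (1\<^sub>m 1) $$ (i, j)"
      unfolding entry[OF i j] using i j
      by (auto simp: four_block_mat_def B_def C_def m_def less_Suc_eq)
  qed (auto simp: four_block_mat_def B_def m_def VV_def U_def)
  have "det (VV m y) = det (VV m y * U)"
    using det_mult[OF Vc Uc] dU by simp
  also have "\<dots> = det B * det (1\<^sub>m 1 :: complex mat)"
    unfolding blk by (rule det_four_block_mat_lower_left_zero) (auto simp: B_def C_def)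
  also have "det B = (\<Prod>r\<in>{0..<p}. y r - y p) * det (VV p y)"
    unfolding B_def VV_def using det_rowscale[of p "\<lambda>r. y r - y p" "\<lambda>r s. ff (y r) (p - 1 - s)"]
    by simp
  finally show ?case using Suc by (simp add: m_def mult_ac)
qed



lemma ff_fact: "q \<le> L \<Longrightarrow> ff (of_nat L) q * of_nat (fact (L - q)) = of_nat (fact L)"
proof (induction q)
  case 0
  then show ?case by simp
next
  case (Suc q)
  then have "q \<le> L" by simp
  have "fact (L - q) = (L - q) * fact (L - Suc q)"
  proof -
    have "L - q = Suc (L - Suc q)" using Suc.prems by simp
    then show ?thesis by (simp only: fact_Suc) simp
  qed
  then have "ff (of_nat L) (Suc q) * of_nat (fact (L - Suc q)) = ff (of_nat L) q * of_nat (fact (L - q))"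
    using Suc.prems by (simp add: ff_Suc of_nat_diff mult_ac)
  then show ?case using Suc.IH[OF \<open>q \<le> L\<close>] by simp
qed

lemma rf_ff: "rf (int L - int q) = ff (of_nat L) q / of_nat (fact L)"
proof (cases "q \<le> L")
  case True
  have nz: "(of_nat (fact (L - q)) :: complex) \<noteq> 0" by simp
  have "rf (int L - int q) = 1 / of_nat (fact (L - q))"
    using True unfolding rf_def by (simp add: nat_diff_distrib)
  also have "\<dots> = ff (of_nat L) q / of_nat (fact L)"
    using ff_fact[OF True] nz by (simp add: field_simps)
  finally show ?thesis .
next
  case False
  have "ff (of_nat L) q = 0"
    unfolding ff_def using False by (intro prod_zero) auto
  then show ?thesis using False by (simp add: rf_def)
qed

lemma const_eval:
  assumes lam: "length lam = l" "k \<le> l"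
  shows "fact (Nlk lam k) * (\<Sum>\<rho>\<in>{\<rho>. \<rho> permutes {0..<l-k}}. signof \<rho> *
            (\<Prod>r\<in>{0..<l-k}. rf (int (lam ! (k + r)) - int r + int (\<rho> r)))) = cprime lam k"
proof -
  define m where "m = l - k"
  have lkm: "l = k + m" using lam by (simp add: m_def)
  define L where "L r = lam ! (k + r) + (m - 1 - r)" for r
  define y where "y r = (of_nat (L r) :: complex)" for r
  have rfeq: "rf (int (lam ! (k + r)) - int r + int (\<rho> r)) = ff (y r) (m - 1 - \<rho> r) / of_nat (fact (L r))"
    if "r < m" "\<rho> r < m" for r \<rho>
  proof -
    have "int (lam ! (k + r)) - int r + int (\<rho> r) = int (L r) - int (m - 1 - \<rho> r)"
      using that by (simp add: L_def of_nat_diff)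
    then show ?thesis by (simp add: rf_ff y_def)
  qed
  have "(\<Sum>\<rho>\<in>{\<rho>. \<rho> permutes {0..<m}}. signof \<rho> *
            (\<Prod>r\<in>{0..<m}. rf (int (lam ! (k + r)) - int r + int (\<rho> r))))
      = (\<Sum>\<rho>\<in>{\<rho>. \<rho> permutes {0..<m}}. (\<Prod>r\<in>{0..<m}. 1 / of_nat (fact (L r))) *
            (signof \<rho> * (\<Prod>r\<in>{0..<m}. VV m y $$ (r, \<rho> r))))"
  proof (rule sum.cong[OF refl])
    fix \<rho> assume "\<rho> \<in> {\<rho>. \<rho> permutes {0..<m}}"
    then have r: "\<rho> permutes {0..<m}" by simp
    have "(\<Prod>r\<in>{0..<m}. rf (int (lam ! (k + r)) - int r + int (\<rho> r)))
        = (\<Prod>r\<in>{0..<m}. (1 / of_nat (fact (L r))) * VV m y $$ (r, \<rho> r))"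
      using permutes_in_image[OF r] by (intro prod.cong) (auto simp: rfeq VV_def)
    then show "signof \<rho> * (\<Prod>r\<in>{0..<m}. rf (int (lam ! (k + r)) - int r + int (\<rho> r)))
       = (\<Prod>r\<in>{0..<m}. 1 / of_nat (fact (L r))) * (signof \<rho> * (\<Prod>r\<in>{0..<m}. VV m y $$ (r, \<rho> r)))"
      by (simp add: prod_dividef)
  qed
  also have "\<dots> = (\<Prod>r\<in>{0..<m}. 1 / of_nat (fact (L r))) * det (VV m y)"
    by (subst det_def'[of _ m]) (auto simp: VV_def sum_distrib_left)
  also have "\<dots> = (\<Prod>r\<in>{0..<m}. 1 / of_nat (fact (L r))) * (\<Prod>b\<in>{0..<m}. \<Prod>a\<in>{0..<b}. y a - y b)"
    by (simp add: vdm)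
  finally have S: "(\<Sum>\<rho>\<in>{\<rho>. \<rho> permutes {0..<m}}. signof \<rho> *
            (\<Prod>r\<in>{0..<m}. rf (int (lam ! (k + r)) - int r + int (\<rho> r))))
       = (\<Prod>r\<in>{0..<m}. 1 / of_nat (fact (L r))) * (\<Prod>b\<in>{0..<m}. \<Prod>a\<in>{0..<b}. y a - y b)" .
  have wvL: "wv lam j = L (m - j)" if "1 \<le> j" "j \<le> m" for j
    using that lam by (simp add: wv_def L_def lkm)
  have F: "(\<Prod>i=1..m. of_nat (fact (wv lam i)) :: complex) = (\<Prod>r\<in>{0..<m}. of_nat (fact (L r)))"
    by (rule prod.reindex_bij_witness[where i="\<lambda>r. m - r" and j="\<lambda>i. m - i"]) (auto simp: wvL)
  have P: "(\<Prod>(i, j)\<in>{(i, j). 1 \<le> i \<and> i < j \<and> j \<le> m}. of_int (int (wv lam j) - int (wv lam i)) :: complex)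
       = (\<Prod>b\<in>{0..<m}. \<Prod>a\<in>{0..<b}. y a - y b)"
  proof -
    have "(\<Prod>b\<in>{0..<m}. \<Prod>a\<in>{0..<b}. y a - y b) = (\<Prod>(b, a)\<in>Sigma {0..<m} (\<lambda>b. {0..<b}). y a - y b)"
      by (simp add: prod.Sigma)
    also have "\<dots> = (\<Prod>(i, j)\<in>{(i, j). 1 \<le> i \<and> i < j \<and> j \<le> m}. of_int (int (wv lam j) - int (wv lam i)))"
      by (rule prod.reindex_bij_witness[where i="\<lambda>(i, j). (m - i, m - j)" and j="\<lambda>(b, a). (m - b, m - a)"])
        (auto simp: wvL y_def)
    finally show ?thesis by simp
  qed
  have "fact (Nlk lam k) * ((\<Prod>r\<in>{0..<m}. 1 / of_nat (fact (L r))) * (\<Prod>b\<in>{0..<m}. \<Prod>a\<in>{0..<b}. y a - y b))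
      = cprime lam k"
    unfolding cprime_def lam(1) m_def[symmetric] F P
    by (simp add: prod_dividef)
  then show ?thesis using S by (simp add: m_def)
qed



lemma schur_Gd: "schur mu = Gd (length mu) (\<lambda>i. int (mu ! i) - int i)"
  by (simp add: schur_def Gd_def fun_eq_iff)

lemma sum_count_list: "set xs \<subseteq> A \<Longrightarrow> finite A \<Longrightarrow> (\<Sum>i\<in>A. count (mset xs) i) = length xs"
proof (induction xs)
  case Nil
  then show ?case by simp
next
  case (Cons x xs)
  have "(\<Sum>i\<in>A. count (mset (x # xs)) i) = (\<Sum>i\<in>A. count (mset xs) i + (if i = x then 1 else 0))"
    by (intro sum.cong) auto
  also have "\<dots> = (\<Sum>i\<in>A. count (mset xs) i) + 1"
    using Cons.prems by (simp add: sum.distrib)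
  finally show ?case using Cons by simp
qed

definition Arho :: "nat list \<Rightarrow> nat \<Rightarrow> (nat \<Rightarrow> nat) \<Rightarrow> nat \<Rightarrow> int" where
  "Arho lam k \<rho> i = (if i < k then 0 else int (lam ! i) - int (i - k) + int (\<rho> (i - k)))"

lemma Arho_sum:
  assumes "length lam = l" "k \<le> l" "\<rho> permutes {0..<l-k}"
  shows "(\<Sum>i\<in>{0..<l}. Arho lam k \<rho> i) = int (Nlk lam k)"
proof -
  define m where "m = l - k"
  have lkm: "l = k + m" using assms by (simp add: m_def)
  have "(\<Sum>i\<in>{0..<l}. Arho lam k \<rho> i) = (\<Sum>i\<in>{0..<k}. Arho lam k \<rho> i) + (\<Sum>i\<in>{k..<l}. Arho lam k \<rho> i)"
    using assms by (simp add: sum.atLeastLessThan_concat)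
  also have "(\<Sum>i\<in>{0..<k}. Arho lam k \<rho> i) = 0" by (simp add: Arho_def)
  also have "(\<Sum>i\<in>{k..<l}. Arho lam k \<rho> i) = (\<Sum>r\<in>{0..<m}. int (lam ! (k + r)) - int r + int (\<rho> r))"
    by (rule sum.reindex_bij_witness[where i="\<lambda>r. k + r" and j="\<lambda>i. i - k"]) (auto simp: Arho_def lkm)
  also have "\<dots> = (\<Sum>r\<in>{0..<m}. int (lam ! (k + r))) - (\<Sum>r\<in>{0..<m}. int r) + (\<Sum>r\<in>{0..<m}. int (\<rho> r))"
    by (simp add: sum.distrib sum_subtractf)
  also have "(\<Sum>r\<in>{0..<m}. int (\<rho> r)) = (\<Sum>r\<in>{0..<m}. int r)"
    using sum.permute[of \<rho> "{0..<m}" int] assms(3) by (simp add: m_def comp_def)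
  also have "(\<Sum>r\<in>{0..<m}. int (lam ! (k + r))) = int (Nlk lam k)"
    unfolding Nlk_def assms(1) of_nat_sum
    by (rule sum.reindex_bij_witness[where i="\<lambda>i. i - k" and j="\<lambda>r. k + r"]) (auto simp: lkm)
  finally show ?thesis by simp
qed

lemma Arho_prod:
  assumes "l = k + m"
  shows "(\<Prod>i\<in>{0..<l}. rf (Arho lam k \<rho> i)) = (\<Prod>r\<in>{0..<m}. rf (int (lam ! (k + r)) - int r + int (\<rho> r)))"
proof -
  have "(\<Prod>i\<in>{0..<l}. rf (Arho lam k \<rho> i)) = (\<Prod>i\<in>{0..<k}. rf (Arho lam k \<rho> i)) * (\<Prod>i\<in>{k..<l}. rf (Arho lam k \<rho> i))"
    using assms by (simp add: prod.atLeastLessThan_concat)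
  also have "(\<Prod>i\<in>{0..<k}. rf (Arho lam k \<rho> i)) = 1" by (simp add: Arho_def rf_def)
  also have "(\<Prod>i\<in>{k..<l}. rf (Arho lam k \<rho> i)) = (\<Prod>r\<in>{0..<m}. rf (int (lam ! (k + r)) - int r + int (\<rho> r)))"
    by (rule prod.reindex_bij_witness[where i="\<lambda>r. k + r" and j="\<lambda>i. i - k"]) (auto simp: Arho_def assms)
  finally show ?thesis by simp
qed

lemma term_eval:
  assumes lam: "is_partition lam" "length lam = l" "k \<le> l"
    and mu: "is_partition mu" "mu = lam \<or> plt lam mu" "length mu = l" "\<forall>i\<in>{k..<l}. mu ! i = lam ! i"
    and xs: "xs \<in> LL (Nlk lam k) l"
  shows "Gd l (\<lambda>i. int (mu ! i) - int i - cnt xs i) (tx k x) =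
    (\<Sum>\<rho>\<in>{\<rho>. \<rho> permutes {0..<l-k}}. if (\<forall>i<l. cnt xs i = Arho lam k \<rho> i)
        then signof \<rho> * schur (take k mu) (tx k x) else 0)"
proof -
  define m where "m = l - k"
  have lkm: "l = k + m" using lam by (simp add: m_def)
  define P where "P = {\<rho>. \<rho> permutes {0..<m}}"
  define cond where "cond \<rho> \<longleftrightarrow> (\<forall>i<l. cnt xs i = Arho lam k \<rho> i)" for \<rho>
  define sv where "sv = schur (take k mu) (tx k x)"
  have uniq: "\<rho> = \<rho>'" if "\<rho> \<in> P" "\<rho>' \<in> P" "cond \<rho>" "cond \<rho>'" for \<rho> \<rho>'
  proof
    fix r
    show "\<rho> r = \<rho>' r"
    proof (cases "r < m")
      case True
      then have "Arho lam k \<rho> (k + r) = Arho lam k \<rho>' (k + r)"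
        using that(3,4) lkm unfolding cond_def by (metis add_less_cancel_left)
      then show ?thesis by (simp add: Arho_def)
    next
      case False
      then show ?thesis using that(1,2) permutes_not_in unfolding P_def by (metis atLeastLessThan_iff mem_Collect_eq)
    qed
  qed
  show ?thesis
  proof (cases "\<exists>\<rho>\<in>P. cond \<rho>")
    case True
    then obtain \<rho> where r: "\<rho> \<in> P" "cond \<rho>" by blast
    have "(\<Sum>\<rho>'\<in>P. if cond \<rho>' then signof \<rho>' * sv else 0) = (\<Sum>\<rho>'\<in>P. if \<rho>' = \<rho> then signof \<rho> * sv else 0)"
      using uniq r by (intro sum.cong) auto
    also have "\<dots> = signof \<rho> * sv"
      using r by (simp add: sum.delta' P_def finite_permutations)
    finally have S: "(\<Sum>\<rho>'\<in>P. if cond \<rho>' then signof \<rho>' * sv else 0) = signof \<rho> * sv" .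
    have rp: "\<rho> permutes {0..<l-k}" using r by (simp add: P_def m_def)
    have G: "Gd l (\<lambda>i. int (mu ! i) - int i - cnt xs i) (tx k x) = signof \<rho> * sv"
      unfolding sv_def
    proof (rule stepF[OF mu(3) lam(3) rp])
      show "\<forall>i<k. int (mu ! i) - int i - cnt xs i = int (mu ! i) - int i"
        using r(2) lam(3) unfolding cond_def by (auto simp: Arho_def)
      show "\<forall>i\<in>{k..<l}. int (mu ! i) - int i - cnt xs i = - int (k + \<rho> (i - k))"
        using r(2) mu(4) unfolding cond_def by (auto simp: Arho_def of_nat_diff)
    qed
    show ?thesis using S G unfolding P_def cond_def m_def sv_def by simp
  next
    case False
    have S: "(\<Sum>\<rho>'\<in>P. if cond \<rho>' then signof \<rho>' * sv else 0) = 0"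
      using False by (intro sum.neutral) auto
    have "Gd l (\<lambda>i. int (mu ! i) - int i - cnt xs i) (tx k x) = 0"
    proof (rule ccontr)
      assume "Gd l (\<lambda>i. int (mu ! i) - int i - cnt xs i) (tx k x) \<noteq> 0"
      from vanish[OF this] obtain \<sigma> where s: "\<sigma> permutes {0..<l}"
        and s2: "\<forall>i<l. k \<le> \<sigma> i \<longrightarrow> int (mu ! i) - int i - cnt xs i = - int (\<sigma> i)" by blast
      have asum: "(\<Sum>i\<in>{0..<l}. count (mset xs) i) = Nlk lam k"
        using xs sum_count_list[of xs "{0..<l}"] by (simp add: LL_def)
      have s2': "\<forall>i<l. k \<le> \<sigma> i \<longrightarrow> int (mu ! i) - int i - int (count (mset xs) i) = - int (\<sigma> i)"
        using s2 by (simp add: cnt_def)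
      have cmb: "(\<forall>i<k. count (mset xs) i = 0) \<and> (\<forall>i<l. k \<le> \<sigma> i \<longleftrightarrow> k \<le> i)"
        using combi[OF lam mu(1,2,3) asum s s2'] by blast
      define \<rho> where "\<rho> r = (if r < m then \<sigma> (k + r) - k else r)" for r
      have inj: "inj_on \<rho> {0..<m}"
      proof (rule inj_onI)
        fix r r' assume rr: "r \<in> {0..<m}" "r' \<in> {0..<m}" "\<rho> r = \<rho> r'"
        have "k \<le> \<sigma> (k + r)" "k \<le> \<sigma> (k + r')" using cmb rr lkm by auto
        then have "\<sigma> (k + r) = \<sigma> (k + r')" using rr by (simp add: \<rho>_def)
        then show "r = r'" using permutes_inj[OF s] by (simp add: inj_eq)
      qed
      have img: "\<rho> ` {0..<m} \<subseteq> {0..<m}"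
      proof
        fix s' assume "s' \<in> \<rho> ` {0..<m}"
        then obtain r where r: "r < m" "s' = \<rho> r" by auto
        have "\<sigma> (k + r) < l" using permutes_in_image[OF s] r lkm by simp
        then show "s' \<in> {0..<m}" using r lkm by (simp add: \<rho>_def)
      qed
      have bij: "bij_betw \<rho> {0..<m} {0..<m}"
        using endo_inj_surj[OF _ img inj] inj by (simp add: bij_betw_def)
      have "\<rho> permutes {0..<m}"
        by (rule bij_imp_permutes[OF bij]) (simp add: \<rho>_def)
      then have rp: "\<rho> \<in> P" unfolding P_def by simp
      have "cond \<rho>"
        unfolding cond_def
      proof (intro allI impI)
        fix i assume i: "i < l"
        show "cnt xs i = Arho lam k \<rho> i"
        proof (cases "i < k")
          case True
          then show ?thesis using cmb by (simp add: cnt_def Arho_def)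
        next
          case False
          then have ks: "k \<le> \<sigma> i" using cmb i by simp
          have rho: "\<rho> (i - k) = \<sigma> i - k" using False i lkm by (simp add: \<rho>_def)
          have "int (mu ! i) - int i - cnt xs i = - int (\<sigma> i)" using s2 i ks by blast
          then have "cnt xs i = int (mu ! i) - int i + int (\<sigma> i)" by linarith
          then show ?thesis using False i mu(4) rho ks by (simp add: Arho_def of_nat_diff)
        qed
      qed
      then show False using False rp by blast
    qed
    then show ?thesis using S unfolding P_def cond_def m_def sv_def by simp
  qed
qed

lemma mu_term:
  assumes lam: "is_partition lam" "length lam = l" "k \<le> l"
    and mu: "is_partition mu" "mu = lam \<or> plt lam mu"
  shows "(d1 ^^ Nlk lam k) (schur mu) (tx k x) =
    (if length mu = l \<and> (\<forall>i\<in>{k..<l}. mu ! i = lam ! i) then cprime lam k * schur (take k mu) (tx k x) else 0)"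
proof -
  define n where "n = length mu"
  define N where "N = Nlk lam k"
  have D: "(d1 ^^ N) (schur mu) (tx k x) = (\<Sum>xs\<in>LL N n. Gd n (\<lambda>i. int (mu ! i) - int i - cnt xs i) (tx k x))"
    unfolding schur_Gd d1_pow_Gd n_def by simp
  show ?thesis
  proof (cases "n = l \<and> (\<forall>i\<in>{k..<l}. mu ! i = lam ! i)")
    case True
    then have nl: "n = l" and tl: "\<forall>i\<in>{k..<l}. mu ! i = lam ! i" by auto
    define P where "P = {\<rho>. \<rho> permutes {0..<l-k}}"
    define sv where "sv = schur (take k mu) (tx k x)"
    define cond where "cond \<rho> xs \<longleftrightarrow> (\<forall>i<l. cnt xs i = Arho lam k \<rho> i)" for \<rho> xs
    have fP: "finite P" by (simp add: P_def finite_permutations)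
    have "(\<Sum>xs\<in>LL N n. Gd n (\<lambda>i. int (mu ! i) - int i - cnt xs i) (tx k x))
        = (\<Sum>xs\<in>LL N l. \<Sum>\<rho>\<in>P. if cond \<rho> xs then signof \<rho> * sv else 0)"
      unfolding nl P_def sv_def cond_def N_def
      by (intro sum.cong refl term_eval[OF lam mu]) (use nl n_def tl in auto)
    also have "\<dots> = (\<Sum>\<rho>\<in>P. \<Sum>xs\<in>LL N l. if cond \<rho> xs then signof \<rho> * sv else 0)"
      by (rule sum.swap)
    also have "\<dots> = (\<Sum>\<rho>\<in>P. of_nat (card {xs \<in> LL N l. cond \<rho> xs}) * (signof \<rho> * sv))"
      by (intro sum.cong refl) (simp add: sum.inter_filter[symmetric])
    also have "\<dots> = (\<Sum>\<rho>\<in>P. (fact N * (\<Prod>r\<in>{0..<l-k}. rf (int (lam ! (k + r)) - int r + int (\<rho> r)))) * (signof \<rho> * sv))"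
    proof (intro sum.cong refl)
      fix \<rho> assume "\<rho> \<in> P"
      then have rp: "\<rho> permutes {0..<l-k}" by (simp add: P_def)
      have "of_nat (card {xs \<in> LL N l. cond \<rho> xs}) = (fact N :: complex) * (\<Prod>i\<in>{0..<l}. rf (Arho lam k \<rho> i))"
        unfolding cond_def by (rule card_cnt) (use Arho_sum[OF lam(2,3) rp] N_def in simp)
      also have "\<dots> = fact N * (\<Prod>r\<in>{0..<l-k}. rf (int (lam ! (k + r)) - int r + int (\<rho> r)))"
        using lam(3) by (simp add: Arho_prod)
      finally show "of_nat (card {xs \<in> LL N l. cond \<rho> xs}) * (signof \<rho> * sv) =
          (fact N * (\<Prod>r\<in>{0..<l-k}. rf (int (lam ! (k + r)) - int r + int (\<rho> r)))) * (signof \<rho> * sv)" by simp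
    qed
    also have "\<dots> = sv * (fact N * (\<Sum>\<rho>\<in>P. signof \<rho> * (\<Prod>r\<in>{0..<l-k}. rf (int (lam ! (k + r)) - int r + int (\<rho> r)))))"
      by (simp add: sum_distrib_left mult_ac)
    also have "\<dots> = sv * cprime lam k"
      unfolding P_def N_def using const_eval[OF lam(2,3)] by simp
    finally show ?thesis using D True by (simp add: N_def n_def sv_def mult.commute)
  next
    case False
    have "Gd n (\<lambda>i. int (mu ! i) - int i - cnt xs i) (tx k x) = 0" if xs: "xs \<in> LL N n" for xs
    proof (rule ccontr)
      assume "Gd n (\<lambda>i. int (mu ! i) - int i - cnt xs i) (tx k x) \<noteq> 0"
      from vanish[OF this] obtain \<sigma> where s: "\<sigma> permutes {0..<n}"
        and s2: "\<forall>i<n. k \<le> \<sigma> i \<longrightarrow> int (mu ! i) - int i - cnt xs i = - int (\<sigma> i)" by blast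
      have asum: "(\<Sum>i\<in>{0..<n}. count (mset xs) i) = Nlk lam k"
        using xs sum_count_list[of xs "{0..<n}"] by (simp add: LL_def N_def)
      have s2': "\<forall>i<n. k \<le> \<sigma> i \<longrightarrow> int (mu ! i) - int i - int (count (mset xs) i) = - int (\<sigma> i)"
        using s2 by (simp add: cnt_def)
      have "n = l \<and> (\<forall>i\<in>{k..<l}. mu ! i = lam ! i)"
        using combi[OF lam mu(1,2) n_def[symmetric] asum s s2'] by blast
      then show False using False by blast
    qed
    then have "(d1 ^^ N) (schur mu) (tx k x) = 0" unfolding D by (intro sum.neutral) blast
    moreover have "\<not> (length mu = l \<and> (\<forall>i\<in>{k..<l}. mu ! i = lam ! i))" using False n_def by simp
    ultimately show ?thesis by (simp only: N_def if_False)
  qed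
qed

lemma len_le_sum: "0 \<notin> set xs \<Longrightarrow> length xs \<le> sum_list (xs :: nat list)"
  by (induction xs) auto

lemma finite_partitions: "finite {mu. is_partition mu \<and> int (sum_list mu) = d}"
proof (rule finite_subset)
  show "{mu. is_partition mu \<and> int (sum_list mu) = d} \<subseteq> {xs. set xs \<subseteq> {0..nat d} \<and> length xs \<le> nat d}"
  proof
    fix mu assume "mu \<in> {mu. is_partition mu \<and> int (sum_list mu) = d}"
    then have p: "is_partition mu" and s: "sum_list mu = nat d" by auto
    have "set mu \<subseteq> {0..nat d}" using member_le_sum_list[of _ mu] s by auto
    moreover have "length mu \<le> nat d" using len_le_sum[of mu] p s by (simp add: is_partition_def)
    ultimately show "mu \<in> {xs. set xs \<subseteq> {0..nat d} \<and> length xs \<le> nat d}" by simp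
  qed
  show "finite {xs. set xs \<subseteq> {0..nat d} \<and> length xs \<le> nat d}"
    by (rule finite_lists_length_le) simp
qed

theorem theorem3p2:
  fixes lam :: "nat list" and xi :: "nat list \<Rightarrow> complex" and k :: nat
  assumes "is_partition lam" and "length lam = l" and "k \<le> l"
  shows "\<forall>(d::int) (x::nat \<Rightarrow> complex).
    (\<Sum>mu\<in>{mu. is_partition mu \<and> int (sum_list mu) = d + int (Nlk lam k)}.
        tau_coef lam xi mu * (d1 ^^ Nlk lam k) (schur mu) (tx k x))
    = cprime lam k *
      (\<Sum>mu\<in>{mu. is_partition mu \<and> length mu \<le> l \<and> (\<forall>i\<in>{k..<l}. part mu i = lam ! i)
                 \<and> int (sum_list mu) = d + int (Nlk lam k)}.
        tau_coef lam xi mu * schur (take k mu) (tx k x))"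
proof (intro allI)
  fix d :: int and x :: "nat \<Rightarrow> complex"
  define A where "A = {mu. is_partition mu \<and> int (sum_list mu) = d + int (Nlk lam k)}"
  define B where "B = {mu. is_partition mu \<and> length mu \<le> l \<and> (\<forall>i\<in>{k..<l}. part mu i = lam ! i)
                 \<and> int (sum_list mu) = d + int (Nlk lam k)}"
  define g where "g mu = tau_coef lam xi mu * schur (take k mu) (tx k x)" for mu
  have fA: "finite A" unfolding A_def by (rule finite_partitions)
  have BA: "B \<subseteq> A" by (auto simp: A_def B_def)
  have pt: "tau_coef lam xi mu * (d1 ^^ Nlk lam k) (schur mu) (tx k x) = (if mu \<in> B then cprime lam k * g mu else 0)"
    if mu: "mu \<in> A" for mu
  proof (cases "tau_coef lam xi mu = 0")
    case True
    then show ?thesis by (simp add: g_def)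
  next
    case False
    then have ml: "mu = lam \<or> plt lam mu" by (auto simp: tau_coef_def split: if_splits)
    have pm: "is_partition mu" using mu by (simp add: A_def)
    have ge: "l \<le> length mu" using mu_ge_lam[OF assms(1,2) ml refl] by blast
    have iff: "mu \<in> B \<longleftrightarrow> (length mu = l \<and> (\<forall>i\<in>{k..<l}. mu ! i = lam ! i))"
      using mu ge by (auto simp: A_def B_def part_def)
    show ?thesis unfolding mu_term[OF assms pm ml] iff g_def by simp
  qed
  have "(\<Sum>mu\<in>A. tau_coef lam xi mu * (d1 ^^ Nlk lam k) (schur mu) (tx k x))
      = (\<Sum>mu\<in>A. if mu \<in> B then cprime lam k * g mu else 0)"
    using pt by (intro sum.cong) auto
  also have "\<dots> = (\<Sum>mu\<in>B. cprime lam k * g mu)"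
    using fA BA by (simp add: sum.If_cases Int_absorb1 Int_commute)
  also have "\<dots> = cprime lam k * (\<Sum>mu\<in>B. g mu)"
    by (simp add: sum_distrib_left)
  finally show "(\<Sum>mu\<in>{mu. is_partition mu \<and> int (sum_list mu) = d + int (Nlk lam k)}.
        tau_coef lam xi mu * (d1 ^^ Nlk lam k) (schur mu) (tx k x))
    = cprime lam k *
      (\<Sum>mu\<in>{mu. is_partition mu \<and> length mu \<le> l \<and> (\<forall>i\<in>{k..<l}. part mu i = lam ! i)
                 \<and> int (sum_list mu) = d + int (Nlk lam k)}.
        tau_coef lam xi mu * schur (take k mu) (tx k x))"
    unfolding A_def B_def g_def .
qed

end
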